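(* Let $\mathcal S$ be the family of all subsets of $[n]$ of size at most $s$ (single-item $s$-unit auctions). Then for every $m\ge1$ and every sequence of valuation profiles $\vec v_1,\dots,\vec v_T\in[0,1]^n$, \[ \max_{\vec r\in\mathcal I}\sum_{t=1}^T\mathrm{Rev}(\vec r,\vec v_t)-\max_{\vec r\in\mathcal I_m}\sum_{t=1}^T\mathrm{Rev}(\vec r,\vec v_t)\le\frac{2Ts}{m}. \]
   Context: Setting: $n$ bidders with valuation profile $\vec v\in[0,1]^n$; feasible family $\mathcal S$ of sets of bidders that can be served. A VCG auction with bidder-specific reserves $\vec r$: bidders with $v_i<r_i$ are removed; if none remain nothing is allocated; otherwise a welfare-maximizing feasible set among the remaining bidders is served, and each served bidder pays the larger of $r_i$ and his VCG payment (for the $s$-unit case, the highest value among remaining bidders who are not served, or $0$ if all remaining bidders are served). $\mathrm{Rev}(\vec r,\vec v)$ is the total payment. $\mathcal I$ is the class of all such auctions with $\vec r\in[0,1]^n$, and $\mathcal I_m\subseteq\mathcal I$ those with every $r_i\in\{1/m,2/m,\dots,1\}$. *)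

theory Defs
  imports Complex_Main
begin

text \<open>Bidders are 0..n-1; valuations and reserves are functions nat => real,
only their values on bidders matter. The feasible family is all sets of
at most s bidders (s-unit auctions).\<close>

definition remaining :: "nat \<Rightarrow> (nat \<Rightarrow> real) \<Rightarrow> (nat \<Rightarrow> real) \<Rightarrow> nat set" where
  "remaining n r v = {i. i < n \<and> r i \<le> v i}"

definition feasible :: "nat \<Rightarrow> nat set \<Rightarrow> bool" where
  "feasible s A \<longleftrightarrow> card A \<le> s"

definition welfare_max :: "nat \<Rightarrow> nat \<Rightarrow> (nat \<Rightarrow> real) \<Rightarrow> (nat \<Rightarrow> real) \<Rightarrow> nat set \<Rightarrow> bool" where
  "welfare_max n s r v A \<longleftrightarrow> A \<subseteq> remaining n r v \<and> feasible s A \<and>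
     (\<forall>B. B \<subseteq> remaining n r v \<and> feasible s B \<longrightarrow> sum v B \<le> sum v A)"

definition served :: "nat \<Rightarrow> nat \<Rightarrow> (nat \<Rightarrow> real) \<Rightarrow> (nat \<Rightarrow> real) \<Rightarrow> nat set" where
  "served n s r v = (SOME A. welfare_max n s r v A)"

text \<open>VCG payment in the s-unit case: highest value among remaining bidders not served, or 0.\<close>
definition vcg_price :: "nat \<Rightarrow> nat \<Rightarrow> (nat \<Rightarrow> real) \<Rightarrow> (nat \<Rightarrow> real) \<Rightarrow> real" where
  "vcg_price n s r v = Max (insert 0 (v ` (remaining n r v - served n s r v)))"

definition Rev :: "nat \<Rightarrow> nat \<Rightarrow> (nat \<Rightarrow> real) \<Rightarrow> (nat \<Rightarrow> real) \<Rightarrow> real" where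
  "Rev n s r v = (\<Sum>i\<in>served n s r v. max (r i) (vcg_price n s r v))"

definition auctions_I :: "nat \<Rightarrow> (nat \<Rightarrow> real) set" where
  "auctions_I n = {r. (\<forall>i<n. r i \<in> {0..1}) \<and> (\<forall>i\<ge>n. r i = 0)}"

definition auctions_Im :: "nat \<Rightarrow> nat \<Rightarrow> (nat \<Rightarrow> real) set" where
  "auctions_Im n m = {r. (\<forall>i<n. \<exists>k\<in>{1..m}. r i = real k / real m) \<and> (\<forall>i\<ge>n. r i = 0)}"

end

theory Submission imports Defs begin

lemma served_wm:
  fixes v :: "nat \<Rightarrow> real"
  shows "welfare_max n s r v (served n s r v)"
proof -
  let ?R = "remaining n r v"
  have finR: "finite ?R" unfolding remaining_def by auto
  let ?F = "{B. B \<subseteq> ?R \<and> card B \<le> s}"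
  have finF: "finite ?F" using finR by (auto intro: finite_subset[of _ "Pow ?R"])
  have neF: "{} \<in> ?F" by auto
  obtain A where A: "A \<in> ?F" "sum v A = Max (sum v ` ?F)"
    using Max_in[of "sum v ` ?F"] finF neF by fastforce
  have "welfare_max n s r v A"
    unfolding welfare_max_def feasible_def using A finF
    by (auto intro!: Max_ge)
  thus ?thesis unfolding served_def by (rule someI)
qed

lemma wm_basic:
  assumes "welfare_max n s r v S"
  shows "S \<subseteq> remaining n r v" "finite S" "card S \<le> s" "S \<subseteq> {..<n}"
  using assms unfolding welfare_max_def feasible_def remaining_def
  by (auto intro: finite_subset[of _ "{..<n}"])

lemma wm_exch:
  fixes v :: "nat \<Rightarrow> real"
  assumes wm: "welfare_max n s r v S" and v0: "\<forall>i<n. 0 \<le> v i"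
    and i: "i \<in> S" and j: "j \<in> remaining n r v - S"
  shows "v j \<le> v i"
proof -
  have fin: "finite S" and sub: "S \<subseteq> remaining n r v" and cs: "card S \<le> s"
    using wm_basic[OF wm] by auto
  have opt: "\<And>B. B \<subseteq> remaining n r v \<Longrightarrow> card B \<le> s \<Longrightarrow> sum v B \<le> sum v S"
    using wm unfolding welfare_max_def feasible_def by auto
  have "i < n" using sub i unfolding remaining_def by auto
  hence vi: "0 \<le> v i" using v0 by auto
  show ?thesis
  proof (cases "card S < s")
    case True
    have "sum v (insert j S) \<le> sum v S"
      using j sub True fin by (intro opt) (auto simp: card_insert_if)
    hence "v j \<le> 0" using j fin by simp
    thus ?thesis using vi by linarith
  next
    case False
    hence c: "card S = s" using cs by auto
    have "card (insert j (S - {i})) = s" using c i j fin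
      by (simp add: card_insert_if) (metis One_nat_def Suc_pred card_gt_0_iff empty_iff)
    hence "sum v (insert j (S - {i})) \<le> sum v S"
      using j sub i by (intro opt) auto
    moreover have "sum v (insert j (S - {i})) = v j + sum v S - v i"
      using j fin i by (simp add: sum_diff1)
    ultimately show ?thesis by linarith
  qed
qed

lemma wm_small:
  fixes v :: "nat \<Rightarrow> real"
  assumes wm: "welfare_max n s r v S"
    and c: "card S < s" and j: "j \<in> remaining n r v - S"
  shows "v j \<le> 0"
proof -
  have fin: "finite S" and sub: "S \<subseteq> remaining n r v"
    using wm_basic[OF wm] by auto
  have opt: "\<And>B. B \<subseteq> remaining n r v \<Longrightarrow> card B \<le> s \<Longrightarrow> sum v B \<le> sum v S"
    using wm unfolding welfare_max_def feasible_def by auto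
  have "sum v (insert j S) \<le> sum v S"
    using j sub c fin by (intro opt) (auto simp: card_insert_if)
  thus ?thesis using j fin by simp
qed

lemma price_props:
  fixes v :: "nat \<Rightarrow> real"
  assumes v0: "\<forall>i<n. 0 \<le> v i"
  shows "0 \<le> vcg_price n s r v"
    and "j \<in> remaining n r v - served n s r v \<Longrightarrow> v j \<le> vcg_price n s r v"
    and "i \<in> served n s r v \<Longrightarrow> vcg_price n s r v \<le> v i"
    and "vcg_price n s r v = 0 \<or> (\<exists>k \<in> remaining n r v - served n s r v. vcg_price n s r v = v k)"
    and "card (served n s r v) < s \<Longrightarrow> vcg_price n s r v = 0"
proof -
  let ?R = "remaining n r v" and ?S = "served n s r v"
  have wm: "welfare_max n s r v ?S" by (rule served_wm)
  have finR: "finite ?R" unfolding remaining_def by auto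
  let ?M = "insert 0 (v ` (?R - ?S))"
  have finM: "finite ?M" using finR by auto
  have pdef: "vcg_price n s r v = Max ?M" unfolding vcg_price_def by simp
  show "0 \<le> vcg_price n s r v" unfolding pdef using finM by (intro Max_ge) auto
  show "j \<in> ?R - ?S \<Longrightarrow> v j \<le> vcg_price n s r v" unfolding pdef using finM by (intro Max_ge) auto
  show "vcg_price n s r v = 0 \<or> (\<exists>k \<in> ?R - ?S. vcg_price n s r v = v k)"
    using Max_in[OF finM] unfolding pdef by auto
  show "i \<in> ?S \<Longrightarrow> vcg_price n s r v \<le> v i"
  proof -
    assume i: "i \<in> ?S"
    hence "i < n" using wm_basic[OF wm] by auto
    hence "0 \<le> v i" using v0 by auto
    thus ?thesis unfolding pdef using finM wm_exch[OF wm v0 i]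
      by (subst Max_le_iff) auto
  qed
  show "card ?S < s \<Longrightarrow> vcg_price n s r v = 0"
  proof -
    assume c: "card ?S < s"
    have "Max ?M \<le> 0" using finM wm_small[OF wm c] by (subst Max_le_iff) auto
    moreover have "0 \<le> Max ?M" using finM by (intro Max_ge) auto
    ultimately show ?thesis unfolding pdef by linarith
  qed
qed

lemma key:
  fixes v r r' :: "nat \<Rightarrow> real" and d :: real
  assumes v0: "\<forall>i<n. 0 \<le> v i" and d: "d > 0"
    and h1: "\<forall>i<n. r' i \<ge> r i - d" and h2: "\<forall>i<n. r' i \<ge> 0"
    and h3: "\<forall>i<n. r' i \<le> max (r i) d"
  shows "Rev n s r v \<le> Rev n s r' v + real s * d"
proof -
  define R where "R = remaining n r v"
  define S where "S = served n s r v"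
  define p where "p = vcg_price n s r v"
  define R' where "R' = remaining n r' v"
  define S' where "S' = served n s r' v"
  define p' where "p' = vcg_price n s r' v"
  define pay where "pay i = max (r i) p" for i
  define pay' where "pay' i = max (r' i) p'" for i
  have wm: "welfare_max n s r v S" unfolding S_def by (rule served_wm)
  have wm': "welfare_max n s r' v S'" unfolding S'_def by (rule served_wm)
  note b = wm_basic[OF wm, folded R_def]
  note b' = wm_basic[OF wm', folded R'_def]
  note pp = price_props[OF v0, where s=s and r=r, folded R_def S_def p_def]
  note pp' = price_props[OF v0, where s=s and r=r', folded R'_def S'_def p'_def]
  have Rev: "Rev n s r v = sum pay S" unfolding Rev_def pay_def S_def p_def by simp
  have Rev': "Rev n s r' v = sum pay' S'" unfolding Rev_def pay'_def S'_def p'_def by simp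
  have payv: "pay i \<le> v i" if "i \<in> S" for i
    using that pp(3)[of i] b(1) unfolding pay_def R_def remaining_def by auto
  have pay'p: "p' \<le> pay' j" for j unfolding pay'_def by simp
  have p'0: "0 \<le> p'" by (rule pp'(1))
  define A where "A = {i \<in> S. v i \<ge> d}"
  have finS: "finite S" and finS': "finite S'" using b b' by auto
  have finA: "finite A" using finS unfolding A_def by auto
  have AS: "A \<subseteq> S" unfolding A_def by auto
  have AR': "A \<subseteq> R'"
  proof
    fix i assume i: "i \<in> A"
    hence "i \<in> R" using b(1) unfolding A_def by auto
    hence "i < n" "r i \<le> v i" unfolding R_def remaining_def by auto
    moreover have "d \<le> v i" using i unfolding A_def by auto
    moreover have "r' i \<le> max (r i) d" using h3 \<open>i < n\<close> by auto
    ultimately show "i \<in> R'" unfolding R'_def remaining_def by auto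
  qed
  have st2: "sum pay S \<le> sum pay A + real (card (S - A)) * d"
  proof -
    have "sum pay S = sum pay A + sum pay (S - A)"
      using finS AS sum.subset_diff[of A S pay] by simp
    moreover have "sum pay (S - A) \<le> (\<Sum>i\<in>S - A. d)"
          proof (intro sum_mono)
      fix x assume x: "x \<in> S - A"
      hence "v x < d" unfolding A_def by auto
      thus "pay x \<le> d" using payv[of x] x by auto
    qed
    ultimately show ?thesis by simp
  qed
  have st3: "p' \<ge> p - d"
  proof (cases "p < d")
    case True thus ?thesis using p'0 by linarith
  next
    case False
    hence "p \<noteq> 0" using d by auto
    then obtain k where k: "k \<in> R - S" "p = v k" using pp(4) by auto
    have cS: "card S = s" using pp(5) \<open>p \<noteq> 0\<close> b(3) le_neq_implies_less by blast
    have SA: "S \<subseteq> A" unfolding A_def using pp(3) False by (auto intro: order_trans[of d p])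
    have kR': "k \<in> R'"
    proof -
      have "k < n" "r k \<le> v k" using k unfolding R_def remaining_def by auto
      moreover have "r' k \<le> max (r k) d" using h3 \<open>k < n\<close> by auto
      ultimately show ?thesis using k False unfolding R'_def remaining_def by auto
    qed
    have sub: "insert k S \<subseteq> R'" using SA AR' kR' by auto
    have "card (insert k S) = s + 1" using k finS cS by simp
    hence "\<not> insert k S \<subseteq> S'" using b'(3) finS' card_mono[of S' "insert k S"] by linarith
    then obtain j where j: "j \<in> insert k S" "j \<notin> S'" by auto
    have "v j \<ge> p" using j k pp(3) by auto
    moreover have "v j \<le> p'" using pp'(2)[of j] j sub by auto
    ultimately show ?thesis using d by linarith
  qed
  have st4: "pay' i \<ge> pay i - d" if "i \<in> A" for i
  proof -
    have "i < n" using that AS b(4) by auto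
    hence "r' i \<ge> r i - d" using h1 by auto
    thus ?thesis using st3 unfolding pay_def pay'_def by linarith
  qed
  have st5: "sum pay (A - S') \<le> sum pay' (S' - A)"
  proof (cases "A - S' = {}")
    case True
    have "0 \<le> sum pay' (S' - A)" using p'0 pay'p by (intro sum_nonneg) (meson order_trans)
    moreover have "A - S' = {}" using True by simp
    ultimately show ?thesis by (metis sum.empty)
  next
    case False
    then obtain i where i: "i \<in> A" "i \<notin> S'" by auto
    have cS': "card S' = s"
    proof (rule ccontr)
      assume "card S' \<noteq> s"
      hence "card S' < s" using b'(3) by auto
      hence "p' = 0" using pp'(5) by auto
      moreover have "v i \<le> p'" using pp'(2)[of i] i AR' by auto
      moreover have "v i \<ge> d" using i unfolding A_def by auto
      ultimately show False using d by linarith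
    qed
    have c1: "card A = card (A \<inter> S') + card (A - S')"
      using finA card_Int_Diff by blast
    have c2: "card S' = card (S' \<inter> A) + card (S' - A)"
      using finS' card_Int_Diff by blast
    have "card A \<le> s" using card_mono[OF finS AS] b(3) by linarith
    hence cc: "card (A - S') \<le> card (S' - A)" using c1 c2 cS' by (simp add: Int_commute)
    have "sum pay (A - S') \<le> (\<Sum>i\<in>A - S'. p')"
    proof (intro sum_mono)
      fix x assume x: "x \<in> A - S'"
      hence "pay x \<le> v x" using payv AS by auto
      also have "v x \<le> p'" using pp'(2)[of x] x AR' by auto
      finally show "pay x \<le> p'" .
    qed
    also have "\<dots> = real (card (A - S')) * p'" by simp
    also have "\<dots> \<le> real (card (S' - A)) * p'" using cc p'0 by (intro mult_right_mono) auto
    also have "\<dots> = (\<Sum>i\<in>S' - A. p')" by simp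
    also have "\<dots> \<le> sum pay' (S' - A)" using pay'p by (intro sum_mono) auto
    finally show ?thesis .
  qed
  have s6a: "sum pay' S' = sum pay' (S' \<inter> A) + sum pay' (S' - A)"
    using finS' sum.Int_Diff by blast
  have s6b: "sum pay A = sum pay (A \<inter> S') + sum pay (A - S')"
    using finA sum.Int_Diff by blast
  have s6c: "sum pay (A \<inter> S') - real (card (A \<inter> S')) * d \<le> sum pay' (A \<inter> S')"
  proof -
    have "(\<Sum>i\<in>A \<inter> S'. pay i - d) \<le> sum pay' (A \<inter> S')"
      using st4 by (intro sum_mono) auto
    thus ?thesis by (simp add: sum_subtractf)
  qed
  have cAS: "card (A \<inter> S') + card (S - A) \<le> s"
  proof -
    have "card (A \<inter> S') \<le> card A" using finA by (intro card_mono) auto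
    moreover have "card A + card (S - A) = card S" using finS AS card_Int_Diff[of S A] by (simp add: Int_absorb1 Int_absorb2 Int_commute)
    ultimately show ?thesis using b(3) by linarith
  qed
  have "real (card (A \<inter> S')) * d + real (card (S - A)) * d \<le> real s * d"
  proof -
    have "real (card (A \<inter> S')) + real (card (S - A)) \<le> real s" using cAS by linarith
    hence "(real (card (A \<inter> S')) + real (card (S - A))) * d \<le> real s * d"
      using d by (intro mult_right_mono) auto
    thus ?thesis by (simp add: algebra_simps)
  qed
  thus ?thesis unfolding Rev Rev' using st2 st5 s6a s6b s6c by (simp add: Int_commute)
qed

lemma Rev_le:
  fixes v r :: "nat \<Rightarrow> real"
  assumes v: "\<forall>i<n. v i \<in> {0..1}"
  shows "Rev n s r v \<le> real n"
proof -
  have v0: "\<forall>i<n. 0 \<le> v i" using v by auto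
  let ?S = "served n s r v"
  have wm: "welfare_max n s r v ?S" by (rule served_wm)
  note b = wm_basic[OF wm]
  have "Rev n s r v \<le> (\<Sum>i\<in>?S. 1)" unfolding Rev_def
  proof (intro sum_mono)
    fix i assume i: "i \<in> ?S"
    hence "i < n" "r i \<le> v i" using b(1) unfolding remaining_def by auto
    moreover have "vcg_price n s r v \<le> v i" using price_props(3)[OF v0 i] .
    ultimately show "max (r i) (vcg_price n s r v) \<le> 1" using v by auto
  qed
  also have "\<dots> = real (card ?S)" by simp
  also have "\<dots> \<le> real n" using card_mono[OF _ b(4)] by simp
  finally show ?thesis .
qed

theorem mainTheorem6:
  fixes n s m T :: nat and vs :: "nat \<Rightarrow> nat \<Rightarrow> real"
  assumes "m \<ge> 1"
    and "\<forall>t<T. \<forall>i<n. vs t i \<in> {0..1}"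
  shows "(SUP r\<in>auctions_I n. \<Sum>t<T. Rev n s r (vs t))
         - (SUP r\<in>auctions_Im n m. \<Sum>t<T. Rev n s r (vs t))
         \<le> 2 * real T * real s / real m"
proof -
  have m0: "real m > 0" using assms(1) by simp
  define rr where "rr r = (\<lambda>i. if i < n then real (max 1 (nat \<lfloor>real m * r i\<rfloor>)) / real m else 0)"
    for r :: "nat \<Rightarrow> real"
  let ?F = "\<lambda>r. \<Sum>t<T. Rev n s r (vs t)"
  have bdd: "bdd_above (?F ` auctions_Im n m)"
  proof (rule bdd_aboveI2)
    fix r
    have "?F r \<le> (\<Sum>t<T. real n)" using assms(2) by (intro sum_mono Rev_le) auto
    thus "?F r \<le> real T * real n" by simp
  qed
  have ne: "auctions_I n \<noteq> {}" proof -
    have "(\<lambda>_. 0) \<in> auctions_I n" unfolding auctions_I_def by auto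
    thus ?thesis by blast
  qed
  have step: "?F r \<le> (SUP r\<in>auctions_Im n m. ?F r) + real T * real s / real m"
    if r: "r \<in> auctions_I n" for r
  proof -
    have rI: "\<forall>i<n. 0 \<le> r i \<and> r i \<le> 1" using r unfolding auctions_I_def by auto
    have kprops: "1 \<le> max 1 (nat \<lfloor>real m * r i\<rfloor>) \<and> max 1 (nat \<lfloor>real m * r i\<rfloor>) \<le> m
       \<and> real (max 1 (nat \<lfloor>real m * r i\<rfloor>)) \<ge> real m * r i - 1
       \<and> (max 1 (nat \<lfloor>real m * r i\<rfloor>) = 1 \<or> real (max 1 (nat \<lfloor>real m * r i\<rfloor>)) \<le> real m * r i)"
      if i: "i < n" for i
    proof -
      have a: "0 \<le> r i" "r i \<le> 1" using rI i by auto
      have "real m * r i \<le> real m" using a m0 by (simp add: mult_left_le)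
      hence "\<lfloor>real m * r i\<rfloor> \<le> int m" by linarith
      hence c1: "nat \<lfloor>real m * r i\<rfloor> \<le> m" by linarith
      have f0: "0 \<le> \<lfloor>real m * r i\<rfloor>" using a m0 by simp
      have c2: "real (nat \<lfloor>real m * r i\<rfloor>) = real_of_int \<lfloor>real m * r i\<rfloor>" using f0 by simp
      have fl: "real_of_int \<lfloor>real m * r i\<rfloor> \<le> real m * r i"
        "real m * r i < real_of_int \<lfloor>real m * r i\<rfloor> + 1" by linarith+
      show ?thesis
      proof (cases "nat \<lfloor>real m * r i\<rfloor> \<le> 1")
        case True
        hence "max 1 (nat \<lfloor>real m * r i\<rfloor>) = 1" by simp
        moreover have "real m * r i - 1 \<le> 1" using fl c2 True by linarith
        ultimately show ?thesis using assms(1) by simp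
      next
        case False
        hence "max 1 (nat \<lfloor>real m * r i\<rfloor>) = nat \<lfloor>real m * r i\<rfloor>" by simp
        hence e: "real (max 1 (nat \<lfloor>real m * r i\<rfloor>)) = real_of_int \<lfloor>real m * r i\<rfloor>"
          using c2 by simp
        have "1 \<le> max 1 (nat \<lfloor>real m * r i\<rfloor>)" "max 1 (nat \<lfloor>real m * r i\<rfloor>) \<le> m"
          using c1 assms(1) by auto
        thus ?thesis using e fl by linarith
      qed
    qed
    have rrIm: "rr r \<in> auctions_Im n m"
      unfolding auctions_Im_def rr_def using kprops by fastforce
    have keyt: "Rev n s r (vs t) \<le> Rev n s (rr r) (vs t) + real s * (1 / real m)" if t: "t < T" for t
    proof (rule key)
      show "\<forall>i<n. 0 \<le> vs t i" using assms(2) t by auto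
      show "0 < 1 / real m" using m0 by simp
      show "\<forall>i<n. r i - 1 / real m \<le> rr r i"
      proof (intro allI impI)
        fix i assume i: "i < n"
        hence "real (max 1 (nat \<lfloor>real m * r i\<rfloor>)) \<ge> real m * r i - 1" using kprops by blast
        hence "real (max 1 (nat \<lfloor>real m * r i\<rfloor>)) / real m \<ge> (real m * r i - 1) / real m"
          using m0 by (intro divide_right_mono) auto
        thus "r i - 1 / real m \<le> rr r i" unfolding rr_def using i m0 by (simp add: diff_divide_distrib)
      qed
      show "\<forall>i<n. 0 \<le> rr r i" unfolding rr_def by auto
      show "\<forall>i<n. rr r i \<le> max (r i) (1 / real m)"
      proof (intro allI impI)
        fix i assume i: "i < n"
        show "rr r i \<le> max (r i) (1 / real m)"
        proof (cases "max 1 (nat \<lfloor>real m * r i\<rfloor>) = 1")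
          case True thus ?thesis unfolding rr_def using i by simp
        next
          case False
          hence "real (max 1 (nat \<lfloor>real m * r i\<rfloor>)) \<le> real m * r i" using kprops i by blast
          hence "real (max 1 (nat \<lfloor>real m * r i\<rfloor>)) / real m \<le> real m * r i / real m"
            using m0 by (intro divide_right_mono) auto
          thus ?thesis unfolding rr_def using i m0 by simp
        qed
      qed
    qed
    have "?F r \<le> (\<Sum>t<T. Rev n s (rr r) (vs t) + real s * (1 / real m))"
      using keyt by (intro sum_mono) auto
    also have "\<dots> = ?F (rr r) + real T * real s / real m" by (simp add: sum.distrib)
    also have "?F (rr r) \<le> (SUP r\<in>auctions_Im n m. ?F r)" using bdd rrIm by (rule cSUP_upper2) simp
    finally show ?thesis by simp
  qed
  have "(SUP r\<in>auctions_I n. ?F r) \<le> (SUP r\<in>auctions_Im n m. ?F r) + real T * real s / real m"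
    using ne step by (rule cSUP_least)
  moreover have "real T * real s / real m \<le> 2 * real T * real s / real m"
    using m0 by (intro divide_right_mono) auto
  ultimately show ?thesis by linarith
qed

end
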